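(* Writing $\mathrm{m}_{\mathbb{D},h}(x+1)=\frac{1}{\pi}\int_{\mathbb{D}}\log^h|x+1|\,dA(x)$, one has $\mathrm{m}_{\mathbb{D},1}(x+1)=0$, $\mathrm{m}_{\mathbb{D},2}(x+1)=\frac{\zeta(2)-1}{2}$, $\mathrm{m}_{\mathbb{D},3}(x+1)=-\frac{3(\zeta(3)-1)}{2}$, $\mathrm{m}_{\mathbb{D},4}(x+1)=\frac{3(19\zeta(4)-4\zeta(2)-12)}{8}$, and $\mathrm{m}_{\mathbb{D},5}(x+1)=-\frac{15(3\zeta(5)+\zeta(3)\zeta(2)-\zeta(3)-\zeta(2)-2)}{2}$.
   Context: $\mathbb{D}=\{x\in\mathbb{C}:|x|\le 1\}$ and $dA$ is Lebesgue (area) measure on $\mathbb{C}$; $\zeta$ is the Riemann zeta function. *)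

theory Defs
  imports "HOL-Analysis.Analysis"
begin

definition zeta :: "nat \<Rightarrow> real" where
  "zeta k = (\<Sum>n. 1 / (real (Suc n)) ^ k)"

definition mD :: "nat \<Rightarrow> real" where
  "mD h = (1 / pi) * (LINT x : cball (0::complex) 1 | lborel. (ln (cmod (x + 1))) ^ h)"

end

theory Submission
  imports Defs "HOL-Probability.Probability" "HOL-Complex_Analysis.Complex_Analysis"
begin

lemma lborel_complex_pair:
  "distr (lborel \<Otimes>\<^sub>M lborel) borel (\<lambda>p. Complex (fst p) (snd p)) = (lborel :: complex measure)"
proof (rule lborel_eqI[symmetric])
  fix l u :: complex
  assume le: "\<And>b. b \<in> Basis \<Longrightarrow> l \<bullet> b \<le> u \<bullet> b"
  have [measurable]: "(\<lambda>p. Complex (fst p) (snd p)) \<in> borel_measurable (lborel \<Otimes>\<^sub>M lborel)"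
  proof -
    have "(\<lambda>p. Complex (fst p) (snd p)) = (\<lambda>p. complex_of_real (fst p) + \<i> * complex_of_real (snd p))"
      by (auto simp: complex_eq_iff)
    then show ?thesis by simp
  qed
  have pre: "(\<lambda>p. Complex (fst p) (snd p)) -` box l u \<inter> space (lborel \<Otimes>\<^sub>M lborel)
      = {Re l<..<Re u} \<times> {Im l<..<Im u}"
    by (auto simp: box_def Basis_complex_def inner_complex_def space_pair_measure)
  have "Re l \<le> Re u" "Im l \<le> Im u" using le[of 1] le[of \<i>]
    by (auto simp: Basis_complex_def inner_complex_def)
  then show "emeasure (distr (lborel \<Otimes>\<^sub>M lborel) borel (\<lambda>p. Complex (fst p) (snd p))) (box l u)
      = (\<Prod>b\<in>Basis. (u - l) \<bullet> b)"
    by (simp add: emeasure_distr pre lborel.emeasure_pair_measure_Times Basis_complex_def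
        inner_complex_def ennreal_mult')
qed simp

lemma nn_powr_interval:
  fixes p R :: real assumes "p > -1" "R \<ge> 0"
  shows "(\<integral>\<^sup>+a. ennreal (a powr p) * indicator {0..R} a \<partial>lborel) = ennreal (R powr (p+1) / (p+1))"
  by (rule nn_integral_has_integral_lebesgue'[OF _ has_integral_powr_from_0]) (use assms in auto)

lemma nn_gauss:
  fixes y :: real assumes y: "y > 0"
  shows "(\<integral>\<^sup>+c. ennreal (exp (- (y * c\<^sup>2))) \<partial>lborel) = ennreal (sqrt (pi / y))"
proof -
  define \<sigma> where "\<sigma> = 1 / sqrt (2 * y)"
  have s2: "\<sigma>\<^sup>2 = 1 / (2 * y)" using y by (simp add: \<sigma>_def power_divide)
  have eq: "exp (- (y * c\<^sup>2)) = sqrt (pi / y) * normal_density 0 \<sigma> c" for c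
  proof -
    have "sqrt (2 * pi * \<sigma>\<^sup>2) = sqrt (pi / y)" using s2 y by simp
    moreover have "- (c - 0)\<^sup>2 / (2 * \<sigma>\<^sup>2) = - (y * c\<^sup>2)" using y by (simp add: s2 field_simps)
    ultimately show ?thesis using y unfolding normal_density_def by simp
  qed
  have "(\<integral>\<^sup>+c. ennreal (exp (- (y * c\<^sup>2))) \<partial>lborel)
      = (\<integral>\<^sup>+c. ennreal (sqrt (pi / y)) * ennreal (normal_density 0 \<sigma> c) \<partial>lborel)"
    using y by (intro nn_integral_cong) (simp add: eq ennreal_mult')
  also have "\<dots> = ennreal (sqrt (pi / y)) * (\<integral>\<^sup>+c. ennreal (normal_density 0 \<sigma> c) \<partial>lborel)"
    by (rule nn_integral_cmult) simp
  also have "(\<integral>\<^sup>+c. ennreal (normal_density 0 \<sigma> c) \<partial>lborel) = 1"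
  proof -
    have "\<sigma> > 0" using y by (simp add: \<sigma>_def)
    then show ?thesis
      by (subst nn_integral_eq_integral[OF integrable_normal_density]) (auto simp: integral_normal_density)
  qed
  finally show ?thesis by simp
qed

lemma nn_Kq:
  fixes q :: real assumes q: "q > 1/2"
  shows "(\<integral>\<^sup>+c. ennreal ((1 + c\<^sup>2) powr (-q)) \<partial>lborel) = ennreal (sqrt pi * Gamma (q - 1/2) / Gamma q)"
proof -
  have q0: "q > 0" using q by simp
  have Gq: "Gamma q > 0" using q0 by (rule Gamma_real_pos)
  have Gq': "Gamma (q - 1/2) > 0" using q by (intro Gamma_real_pos) simp
  define g where "g = (\<lambda>y::real. indicator {0..} y * y powr (q - 1) / exp y)"
  have step_a: "ennreal (Gamma q * (1 + c\<^sup>2) powr (-q)) =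
      (\<integral>\<^sup>+y. ennreal (g y * exp (- (y * c\<^sup>2))) \<partial>lborel)" for c :: real
  proof -
    define w where "w = 1 + c\<^sup>2"
    have w: "w > 0" unfolding w_def by (simp add: add_pos_nonneg)
    have "ennreal (Gamma q) = (\<integral>\<^sup>+t. ennreal (g t) \<partial>lborel)"
      unfolding g_def by (rule Gamma_conv_nn_integral_real[OF q0])
    also have "\<dots> = ennreal w * (\<integral>\<^sup>+y. ennreal (g (0 + w * y)) \<partial>lborel)"
      using w nn_integral_real_affine[of "\<lambda>t. ennreal (g t)" w 0] by (simp add: g_def)
    also have "(\<lambda>y. ennreal (g (0 + w * y))) = (\<lambda>y. ennreal (w powr (q - 1)) * ennreal (g y * exp (- (y * c\<^sup>2))))"
    proof
      fix y :: real
      show "ennreal (g (0 + w * y)) = ennreal (w powr (q - 1)) * ennreal (g y * exp (- (y * c\<^sup>2)))"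
      proof (cases "y \<ge> 0")
        case True
        have p: "(w * y) powr (q - 1) = w powr (q - 1) * y powr (q - 1)"
          using True w by (simp add: powr_mult)
        have e: "exp (w * y) = exp y * exp (y * c\<^sup>2)"
          unfolding w_def by (simp add: exp_add[symmetric] algebra_simps)
        have "g (0 + w * y) = w powr (q - 1) * (g y * exp (- (y * c\<^sup>2)))"
          using True w by (simp add: g_def p e exp_minus field_simps)
        then show ?thesis by (metis ennreal_mult' powr_ge_zero)
      next
        case False
        then have "w * y < 0" using w by (simp add: mult_pos_neg)
        then show ?thesis using False by (simp add: g_def)
      qed
    qed
    also have "(\<integral>\<^sup>+y. ennreal (w powr (q - 1)) * ennreal (g y * exp (- (y * c\<^sup>2))) \<partial>lborel)
        = ennreal (w powr (q - 1)) * (\<integral>\<^sup>+y. ennreal (g y * exp (- (y * c\<^sup>2))) \<partial>lborel)"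
      by (rule nn_integral_cmult) (simp add: g_def)
    finally have *: "ennreal (Gamma q) = ennreal w * ennreal (w powr (q - 1)) *
        (\<integral>\<^sup>+y. ennreal (g y * exp (- (y * c\<^sup>2))) \<partial>lborel)" by (simp add: mult.assoc)
    have "ennreal w * ennreal (w powr (q - 1)) = ennreal (w powr q)"
      using w by (simp add: ennreal_mult'[symmetric] powr_diff field_simps)
    with * have **: "ennreal (Gamma q) = ennreal (w powr q) * (\<integral>\<^sup>+y. ennreal (g y * exp (- (y * c\<^sup>2))) \<partial>lborel)"
      by simp
    have "ennreal (Gamma q * w powr (-q)) = ennreal (w powr (-q)) * ennreal (Gamma q)"
      using Gq by (simp add: ennreal_mult' mult.commute)
    also have "\<dots> = (ennreal (w powr (-q)) * ennreal (w powr q)) * (\<integral>\<^sup>+y. ennreal (g y * exp (- (y * c\<^sup>2))) \<partial>lborel)"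
      by (simp add: ** mult.assoc)
    also have "ennreal (w powr (-q)) * ennreal (w powr q) = 1"
      using w by (simp add: ennreal_mult'[symmetric] powr_minus)
    finally show ?thesis by (simp add: w_def)
  qed
  have "ennreal (Gamma q) * (\<integral>\<^sup>+c. ennreal ((1 + c\<^sup>2) powr (-q)) \<partial>lborel)
      = (\<integral>\<^sup>+c. ennreal (Gamma q * (1 + c\<^sup>2) powr (-q)) \<partial>lborel)"
    using Gq by (subst nn_integral_cmult[symmetric]) (auto simp: ennreal_mult')
  also have "\<dots> = (\<integral>\<^sup>+c. \<integral>\<^sup>+y. ennreal (g y * exp (- (y * c\<^sup>2))) \<partial>lborel \<partial>lborel)"
    by (simp add: step_a)
  also have "\<dots> = (\<integral>\<^sup>+y. \<integral>\<^sup>+c. ennreal (g y * exp (- (y * c\<^sup>2))) \<partial>lborel \<partial>lborel)"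
    by (subst lborel_pair.Fubini') (auto simp: case_prod_unfold g_def)
  also have "\<dots> = (\<integral>\<^sup>+y. ennreal (sqrt pi * (indicator {0..} y * y powr (q - 1/2 - 1) / exp y)) \<partial>lborel)"
  proof (intro nn_integral_cong_AE eventually_mono[OF AE_lborel_singleton[of 0]])
    fix y :: real assume y0: "y \<noteq> 0"
    show "(\<integral>\<^sup>+c. ennreal (g y * exp (- (y * c\<^sup>2))) \<partial>lborel) =
        ennreal (sqrt pi * (indicator {0..} y * y powr (q - 1/2 - 1) / exp y))"
    proof (cases "y > 0")
      case True
      have "(\<integral>\<^sup>+c. ennreal (g y * exp (- (y * c\<^sup>2))) \<partial>lborel)
          = (\<integral>\<^sup>+c. ennreal (g y) * ennreal (exp (- (y * c\<^sup>2))) \<partial>lborel)"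
        using True by (intro nn_integral_cong) (simp add: ennreal_mult'[symmetric] g_def field_simps)
      also have "\<dots> = ennreal (g y) * ennreal (sqrt (pi / y))"
        using True by (subst nn_integral_cmult) (auto simp: nn_gauss)
      also have "\<dots> = ennreal (sqrt pi * (indicator {0..} y * y powr (q - 1/2 - 1) / exp y))"
      proof -
        have "g y * sqrt (pi / y) = sqrt pi * (indicator {0..} y * y powr (q - 1/2 - 1) / exp y)"
        proof -
          have "y powr (q - 1) = y powr (q - 1/2 - 1 + 1/2)" by (simp add: algebra_simps)
          also have "\<dots> = y powr (q - 1/2 - 1) * sqrt y" using True by (simp only: powr_add powr_half_sqrt)
          finally have h: "y powr (q - 1/2 - 1) = y powr (q - 1) / sqrt y" using True by (simp add: field_simps)
          show ?thesis using True h by (simp add: g_def real_sqrt_divide field_simps)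
        qed
        then show ?thesis using True by (simp add: ennreal_mult'[symmetric] g_def)
      qed
      finally show ?thesis .
    next
      case False
      then show ?thesis using y0 by (simp add: g_def)
    qed
  qed
  also have "\<dots> = ennreal (sqrt pi) * (\<integral>\<^sup>+y. ennreal (indicator {0..} y * y powr (q - 1/2 - 1) / exp y) \<partial>lborel)"
    by (subst nn_integral_cmult[symmetric]) (auto intro!: nn_integral_cong simp: ennreal_mult'[symmetric])
  also have "\<dots> = ennreal (sqrt pi * Gamma (q - 1/2))"
    using q by (subst Gamma_conv_nn_integral_real[symmetric]) (auto simp: ennreal_mult')
  finally have E: "ennreal (Gamma q) * (\<integral>\<^sup>+c. ennreal ((1 + c\<^sup>2) powr (-q)) \<partial>lborel) = ennreal (sqrt pi * Gamma (q - 1/2))" .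
  have "(\<integral>\<^sup>+c. ennreal ((1 + c\<^sup>2) powr (-q)) \<partial>lborel) = ennreal (1 / Gamma q) * (ennreal (Gamma q) * (\<integral>\<^sup>+c. ennreal ((1 + c\<^sup>2) powr (-q)) \<partial>lborel))"
    using Gq by (simp add: mult.assoc[symmetric] ennreal_mult'[symmetric])
  also have "\<dots> = ennreal (sqrt pi * Gamma (q - 1/2) / Gamma q)"
    unfolding E using Gq Gq' by (simp add: ennreal_mult'[symmetric])
  finally show ?thesis .
qed

lemma cball11_iff: "Complex a b \<in> cball 1 1 \<longleftrightarrow> (a - 1)\<^sup>2 + b\<^sup>2 \<le> 1"
proof -
  have e: "1 - Complex a b = Complex (1 - a) (- b)" by (simp add: complex_eq_iff)
  have "dist 1 (Complex a b) = sqrt ((a - 1)\<^sup>2 + b\<^sup>2)"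
    by (simp add: dist_norm e complex_norm power2_commute[of 1 a])
  then show ?thesis by (simp add: mem_cball)
qed

lemma cmod_Complex_powr: "cmod (Complex a b) powr s = ((a\<^sup>2 + b\<^sup>2)) powr (s/2)"
  by (simp add: complex_norm powr_half_sqrt[symmetric] powr_powr)

lemma N_translate:
  "(\<integral>\<^sup>+x. ennreal (indicator (cball 0 1) x * cmod (x + 1) powr s) \<partial>lborel)
   = (\<integral>\<^sup>+y. ennreal (indicator (cball 1 1) y * cmod y powr s) \<partial>lborel)"
proof -
  have [measurable]: "cball (1::complex) 1 \<in> sets borel" by simp
  have "(\<integral>\<^sup>+y. ennreal (indicator (cball 1 1) y * cmod y powr s) \<partial>lborel)
      = (\<integral>\<^sup>+y. ennreal (indicator (cball 1 1) y * cmod y powr s) \<partial>distr lborel borel ((+) 1))"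
    by (simp add: lborel_distr_plus)
  also have "\<dots> = (\<integral>\<^sup>+x. ennreal (indicator (cball 1 1) (1 + x) * cmod (1 + x) powr s) \<partial>lborel)"
    by (subst nn_integral_distr) auto
  also have "\<dots> = (\<integral>\<^sup>+x. ennreal (indicator (cball 0 1) x * cmod (x + 1) powr s) \<partial>lborel)"
    by (intro nn_integral_cong) (simp add: indicator_def mem_cball dist_norm add.commute)
  finally show ?thesis ..
qed

lemma N_fubini:
  fixes F :: "complex \<Rightarrow> ennreal"
  assumes [measurable]: "F \<in> borel_measurable borel"
  shows "(\<integral>\<^sup>+y. F y \<partial>lborel) = (\<integral>\<^sup>+a. \<integral>\<^sup>+b. F (Complex a b) \<partial>lborel \<partial>lborel)"
proof -
  have [measurable]: "(\<lambda>p. Complex (fst p) (snd p)) \<in> borel_measurable (lborel \<Otimes>\<^sub>M lborel)"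
  proof -
    have "(\<lambda>p. Complex (fst p) (snd p)) = (\<lambda>p. complex_of_real (fst p) + \<i> * complex_of_real (snd p))"
      by (auto simp: complex_eq_iff)
    then show ?thesis by simp
  qed
  have "(\<integral>\<^sup>+y. F y \<partial>lborel) = (\<integral>\<^sup>+y. F y \<partial>distr (lborel \<Otimes>\<^sub>M lborel) borel (\<lambda>p. Complex (fst p) (snd p)))"
    by (simp add: lborel_complex_pair)
  also have "\<dots> = (\<integral>\<^sup>+p. F (Complex (fst p) (snd p)) \<partial>(lborel \<Otimes>\<^sub>M lborel))"
    by (subst nn_integral_distr) auto
  also have "\<dots> = (\<integral>\<^sup>+a. \<integral>\<^sup>+b. F (Complex a b) \<partial>lborel \<partial>lborel)"
  proof -
    define G where "G = (\<lambda>p. F (Complex (fst p) (snd p)))"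
    have [measurable]: "G \<in> borel_measurable (lborel \<Otimes>\<^sub>M lborel)" unfolding G_def by measurable
    have "(\<integral>\<^sup>+a. \<integral>\<^sup>+b. G (a, b) \<partial>lborel \<partial>lborel) = integral\<^sup>N (lborel \<Otimes>\<^sub>M lborel) G"
      by (rule lborel.nn_integral_fst) measurable
    then show ?thesis by (simp add: G_def)
  qed
  finally show ?thesis .
qed

lemma L1: assumes a: "a < 0" shows "indicator (cball 1 1) (Complex a b) = (0::real)"
proof -
  have "(a - 1)\<^sup>2 = a\<^sup>2 - 2 * a + 1" by (simp add: power2_eq_square algebra_simps)
  then have "(a - 1)\<^sup>2 + b\<^sup>2 > 1" using a by (smt (verit) zero_le_power2)
  then show ?thesis using cball11_iff[of a b] by (simp add: indicator_def)
qed

lemma L2: assumes a: "a > 0" shows "Complex a (a * c) \<in> cball 1 1 \<longleftrightarrow> a * (1 + c\<^sup>2) \<le> 2"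
proof -
  have "(a - 1)\<^sup>2 + (a * c)\<^sup>2 \<le> 1 \<longleftrightarrow> a * (a * (1 + c\<^sup>2)) \<le> a * 2"
    by (simp add: power2_eq_square algebra_simps)
  also have "\<dots> \<longleftrightarrow> a * (1 + c\<^sup>2) \<le> 2" using a by simp
  finally show ?thesis using cball11_iff[of a "a * c"] by simp
qed

lemma L3: assumes a: "a > 0" shows "cmod (Complex a (a * c)) powr s = a powr s * (1 + c\<^sup>2) powr (s/2)"
proof -
  have w: "1 + c\<^sup>2 > 0" by (simp add: add_pos_nonneg)
  have "a\<^sup>2 + (a * c)\<^sup>2 = a\<^sup>2 * (1 + c\<^sup>2)" by (simp add: power2_eq_square algebra_simps)
  then have "cmod (Complex a (a * c)) powr s = (a\<^sup>2 * (1 + c\<^sup>2)) powr (s/2)"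
    by (simp add: cmod_Complex_powr)
  also have "\<dots> = (a\<^sup>2) powr (s/2) * (1 + c\<^sup>2) powr (s/2)" using w by (simp add: powr_mult)
  also have "(a\<^sup>2) powr (s/2) = a powr s"
  proof -
    have "a\<^sup>2 = a powr 2" using a by (simp add: powr_numeral)
    then have "(a\<^sup>2) powr (s/2) = a powr (2 * (s/2))" by (simp only: powr_powr)
    then show ?thesis by simp
  qed
  finally show ?thesis .
qed


lemma N_inner:
  fixes s a :: real assumes "a \<noteq> 0"
  shows "(\<integral>\<^sup>+b. ennreal (indicator (cball 1 1) (Complex a b) * cmod (Complex a b) powr s) \<partial>lborel)
    = (\<integral>\<^sup>+c. ennreal (indicator {0<..} a * indicator {..2} (a * (1 + c\<^sup>2)) * a powr (s + 1) * (1 + c\<^sup>2) powr (s/2)) \<partial>lborel)"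
proof (cases "a > 0")
  case False
  with assms have a: "a < 0" by simp
  have "(\<lambda>b. ennreal (indicator (cball 1 1) (Complex a b) * cmod (Complex a b) powr s)) = (\<lambda>b. 0)"
    using L1[OF a] by simp
  moreover have "(\<lambda>c. ennreal (indicator {0<..} a * indicator {..2} (a * (1 + c\<^sup>2)) * a powr (s + 1) * (1 + c\<^sup>2) powr (s/2))) = (\<lambda>c. 0)"
    using a by (simp add: indicator_def)
  ultimately show ?thesis by (simp only:)
next
  case True
  have [measurable]: "cball (1::complex) 1 \<in> sets borel" by simp
  have [measurable]: "(\<lambda>b. Complex a b) \<in> borel_measurable borel"
  proof -
    have "(\<lambda>b. Complex a b) = (\<lambda>b. complex_of_real a + \<i> * complex_of_real b)"
      by (auto simp: complex_eq_iff)
    then show ?thesis by simp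
  qed
  define f where "f = (\<lambda>b. ennreal (indicator (cball 1 1) (Complex a b) * cmod (Complex a b) powr s))"
  have [measurable]: "f \<in> borel_measurable borel" unfolding f_def by measurable
  have "integral\<^sup>N lborel f = ennreal \<bar>a\<bar> * (\<integral>\<^sup>+c. f (0 + a * c) \<partial>lborel)"
    using True by (intro nn_integral_real_affine) auto
  also have "\<dots> = (\<integral>\<^sup>+c. ennreal a * f (a * c) \<partial>lborel)"
    using True by (subst nn_integral_cmult) auto
  also have "\<dots> = (\<integral>\<^sup>+c. ennreal (indicator {0<..} a * indicator {..2} (a * (1 + c\<^sup>2)) * a powr (s + 1) * (1 + c\<^sup>2) powr (s/2)) \<partial>lborel)"
  proof (intro nn_integral_cong)
    fix c :: real
    have e: "a * a powr s = a powr (s + 1)" using True by (simp add: powr_add)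
    have "a * (indicator (cball 1 1) (Complex a (a * c)) * cmod (Complex a (a * c)) powr s)
        = indicator {0<..} a * indicator {..2} (a * (1 + c\<^sup>2)) * a powr (s + 1) * (1 + c\<^sup>2) powr (s/2)"
      using True by (simp del: mem_cball add: L2[OF True] L3[OF True] indicator_def e[symmetric])
    then show "ennreal a * f (a * c) = ennreal (indicator {0<..} a * indicator {..2} (a * (1 + c\<^sup>2)) * a powr (s + 1) * (1 + c\<^sup>2) powr (s/2))"
      unfolding f_def using True by (simp add: ennreal_mult'[symmetric])
  qed
  finally show ?thesis by (simp add: f_def)
qed

lemma N_main:
  fixes s :: real assumes s: "s > -2"
  shows "(\<integral>\<^sup>+x. ennreal (indicator (cball 0 1) x * cmod (x + 1) powr s) \<partial>lborel)
       = ennreal (2 powr (s + 2) / (s + 2) * (sqrt pi * Gamma ((s + 3) / 2) / Gamma (s / 2 + 2)))"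
proof -
  have [measurable]: "cball (1::complex) 1 \<in> sets borel" by simp
  define h where "h = (\<lambda>a c. ennreal (indicator {0<..} a * indicator {..2} (a * (1 + c\<^sup>2)) * a powr (s + 1) * (1 + c\<^sup>2) powr (s/2)))"
  have hm[measurable]: "case_prod h \<in> borel_measurable (lborel \<Otimes>\<^sub>M lborel)"
    unfolding h_def case_prod_unfold by measurable
  have "(\<integral>\<^sup>+x. ennreal (indicator (cball 0 1) x * cmod (x + 1) powr s) \<partial>lborel)
      = (\<integral>\<^sup>+y. ennreal (indicator (cball 1 1) y * cmod y powr s) \<partial>lborel)"
    by (rule N_translate)
  also have "\<dots> = (\<integral>\<^sup>+a. \<integral>\<^sup>+b. ennreal (indicator (cball 1 1) (Complex a b) * cmod (Complex a b) powr s) \<partial>lborel \<partial>lborel)"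
    by (rule N_fubini) measurable
  also have "\<dots> = (\<integral>\<^sup>+a. \<integral>\<^sup>+c. h a c \<partial>lborel \<partial>lborel)"
    unfolding h_def by (intro nn_integral_cong_AE eventually_mono[OF AE_lborel_singleton[of 0]] N_inner)
  also have "\<dots> = (\<integral>\<^sup>+c. \<integral>\<^sup>+a. h a c \<partial>lborel \<partial>lborel)"
    by (rule lborel_pair.Fubini'[symmetric]) (rule hm)
  also have "\<dots> = (\<integral>\<^sup>+c. ennreal (2 powr (s + 2) / (s + 2)) * ennreal ((1 + c\<^sup>2) powr (- (s/2 + 2))) \<partial>lborel)"
  proof (intro nn_integral_cong)
    fix c :: real
    define w where "w = 1 + c\<^sup>2"
    have w: "w > 0" unfolding w_def by (simp add: add_pos_nonneg)
    define R where "R = 2 / w"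
    have R: "R > 0" using w by (simp add: R_def)
    have "(\<integral>\<^sup>+a. h a c \<partial>lborel) = (\<integral>\<^sup>+a. ennreal (w powr (s/2)) * (ennreal (a powr (s + 1)) * indicator {0..R} a) \<partial>lborel)"
    proof (intro nn_integral_cong)
      fix a :: real
      have "a * w \<le> 2 \<longleftrightarrow> a \<le> R" if "a > 0" using that w by (simp add: R_def field_simps)
      then show "h a c = ennreal (w powr (s/2)) * (ennreal (a powr (s + 1)) * indicator {0..R} a)"
        unfolding h_def w_def[symmetric]
        by (cases "a > 0"; cases "a = 0") (auto simp: indicator_def ennreal_mult'[symmetric] mult.commute)
    qed
    also have "\<dots> = ennreal (w powr (s/2)) * (\<integral>\<^sup>+a. ennreal (a powr (s + 1)) * indicator {0..R} a \<partial>lborel)"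
      by (rule nn_integral_cmult) measurable
    also have "(\<integral>\<^sup>+a. ennreal (a powr (s + 1)) * indicator {0..R} a \<partial>lborel) = ennreal (R powr (s + 1 + 1) / (s + 1 + 1))"
      using s R by (intro nn_powr_interval) auto
    also have "ennreal (w powr (s/2)) * ennreal (R powr (s + 1 + 1) / (s + 1 + 1))
        = ennreal (2 powr (s + 2) / (s + 2)) * ennreal (w powr (- (s/2 + 2)))"
    proof -
      have "w powr (s/2) * (R powr (s + 1 + 1) / (s + 1 + 1)) = 2 powr (s + 2) / (s + 2) * w powr (- (s/2 + 2))"
      proof -
        have "R powr (s + 2) = 2 powr (s + 2) / w powr (s + 2)" using w by (simp add: R_def powr_divide)
        moreover have "w powr (s/2) / w powr (s + 2) = w powr (- (s/2 + 2))"
          using w by (simp add: powr_diff[symmetric])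
        moreover have "s + 1 + 1 = s + 2" by simp
        moreover have "\<And>x y z d :: real. x * (y / z / d) = y / d * (x / z)" by (simp add: divide_inverse mult_ac)
        ultimately show ?thesis by metis
      qed
      then show ?thesis using s by (simp add: ennreal_mult'[symmetric])
    qed
    finally show "(\<integral>\<^sup>+a. h a c \<partial>lborel) = ennreal (2 powr (s + 2) / (s + 2)) * ennreal ((1 + c\<^sup>2) powr (- (s/2 + 2)))"
      by (simp add: w_def)
  qed
  also have "\<dots> = ennreal (2 powr (s + 2) / (s + 2)) * (\<integral>\<^sup>+c. ennreal ((1 + c\<^sup>2) powr (- (s/2 + 2))) \<partial>lborel)"
    by (rule nn_integral_cmult) measurable
  also have "(\<integral>\<^sup>+c. ennreal ((1 + c\<^sup>2) powr (- (s/2 + 2))) \<partial>lborel) = ennreal (sqrt pi * Gamma (s/2 + 2 - 1/2) / Gamma (s/2 + 2))"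
    using s by (intro nn_Kq) auto
  also have "s/2 + 2 - 1/2 = (s + 3) / 2" by simp
  finally show ?thesis using s by (simp add: ennreal_mult'[symmetric])
qed

definition Nval :: "real \<Rightarrow> real" where
  "Nval s = 2 powr (s + 2) / (s + 2) * (sqrt pi * Gamma ((s + 3) / 2) / Gamma (s / 2 + 2))"

lemma Nval_nonneg: "s > -2 \<Longrightarrow> Nval s \<ge> 0"
  unfolding Nval_def by (intro mult_nonneg_nonneg divide_nonneg_nonneg less_imp_le[OF Gamma_real_pos]) auto

lemma powr_int:
  fixes s :: real assumes s: "s > -2"
  shows "integrable lborel (\<lambda>x. indicator (cball 0 1) x * cmod (x + 1) powr s)"
    and "integral\<^sup>L lborel (\<lambda>x. indicator (cball 0 1) x * cmod (x + 1) powr s) = Nval s"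
proof -
  have [measurable]: "cball (0::complex) 1 \<in> sets borel" by simp
  have "(\<integral>\<^sup>+x. ennreal (indicator (cball 0 1) x * cmod (x + 1) powr s) \<partial>lborel) = ennreal (Nval s)"
    using N_main[OF s] by (simp add: Nval_def)
  then have "integrable lborel (\<lambda>x. indicator (cball 0 1) x * cmod (x + 1) powr s) \<and>
      integral\<^sup>L lborel (\<lambda>x. indicator (cball 0 1) x * cmod (x + 1) powr s) = Nval s"
    using Nval_nonneg[OF s] by (subst nn_integral_eq_integrable[symmetric]) auto
  then show "integrable lborel (\<lambda>x. indicator (cball 0 1) x * cmod (x + 1) powr s)"
    and "integral\<^sup>L lborel (\<lambda>x. indicator (cball 0 1) x * cmod (x + 1) powr s) = Nval s" by auto
qed

lemma exp_partial_le:
  fixes y :: real assumes "y \<ge> 0"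
  shows "(\<Sum>h<n. y ^ h / fact h) \<le> exp y"
proof -
  have "(\<lambda>h. y ^ h / fact h) sums exp y" using exp_converges[of y] by (simp add: divide_inverse mult.commute)
  then have "summable (\<lambda>h. y ^ h / fact h)" "suminf (\<lambda>h. y ^ h / fact h) = exp y" by (auto simp: sums_iff)
  then show ?thesis using assms sum_le_suminf[of "\<lambda>h. y ^ h / fact h" "{..<n}"] by auto
qed

lemma exp_abs_ln_le:
  fixes r :: real assumes "r > 0"
  shows "exp \<bar>ln r\<bar> \<le> r powr 1 + r powr (-1)"
proof -
  have "exp (ln r) = r" "exp (- ln r) = r powr (-1)" using assms by (simp_all add: powr_def)
  moreover have "r powr (-1) > 0" "r > 0" using assms by simp_all
  ultimately show ?thesis using assms by (cases "ln r \<ge> 0") (simp_all add: abs_if)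
qed

lemma series_main:
  fixes t :: real assumes t: "\<bar>t\<bar> < 1"
  shows "(\<lambda>h. t ^ h / fact h * integral\<^sup>L lborel (\<lambda>x. indicator (cball 0 1) x * ln (cmod (x + 1)) ^ h)) sums Nval t"
proof -
  have [measurable]: "cball (0::complex) 1 \<in> sets borel" by simp
  define D where "D = cball (0::complex) 1"
  define L where "L = (\<lambda>x::complex. ln (cmod (x + 1)))"
  have [measurable]: "D \<in> sets borel" "L \<in> borel_measurable borel" unfolding D_def L_def by measurable
  define w where "w = (\<lambda>x. indicator D x * cmod (x + 1) powr 1 + indicator D x * cmod (x + 1) powr (-1))"
  have wi: "integrable lborel w" unfolding w_def D_def
    by (intro Bochner_Integration.integrable_add powr_int) auto
  define s where "s = (\<lambda>n x. indicator D x * (\<Sum>h<n. (t * L x) ^ h / fact h))"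
  define f where "f = (\<lambda>x. indicator D x * cmod (x + 1) powr t)"
  have [measurable]: "f \<in> borel_measurable borel" "\<And>n. s n \<in> borel_measurable borel" "w \<in> borel_measurable borel"
    unfolding f_def s_def w_def by measurable
  have AEne: "AE x in lborel. x \<noteq> - 1" by (rule AE_lborel_singleton)
  have bnd_exp: "\<bar>indicator D x * (\<Sum>h<n. (t * L x) ^ h / fact h)\<bar> \<le> indicator D x * exp \<bar>L x\<bar>" for x n
  proof -
    have "\<bar>\<Sum>h<n. (t * L x) ^ h / fact h\<bar> \<le> (\<Sum>h<n. \<bar>t * L x\<bar> ^ h / fact h)"
      by (rule order.trans[OF sum_abs]) (simp add: power_abs)
    also have "\<dots> \<le> exp \<bar>t * L x\<bar>" by (rule exp_partial_le) simp
    also have "\<dots> \<le> exp \<bar>L x\<bar>" using t by (simp add: abs_mult mult_left_le_one_le)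
    finally show ?thesis by (simp add: indicator_def abs_mult)
  qed
  have w_ge: "indicator D x * exp \<bar>L x\<bar> \<le> w x" if "x \<noteq> -1" for x
  proof -
    have "x + 1 \<noteq> 0" using that by (metis eq_neg_iff_add_eq_0)
    then have "cmod (x + 1) > 0" by simp
    then have "exp \<bar>L x\<bar> \<le> cmod (x + 1) powr 1 + cmod (x + 1) powr (-1)"
      unfolding L_def by (rule exp_abs_ln_le)
    then show ?thesis by (simp add: w_def indicator_def)
  qed
  have bound: "AE x in lborel. norm (s n x) \<le> w x" for n
    using AEne
  proof eventually_elim
    case (elim x)
    have "norm (s n x) \<le> indicator D x * exp \<bar>L x\<bar>" using bnd_exp[of x n] by (simp add: s_def)
    also have "\<dots> \<le> w x" by (rule w_ge[OF elim])
    finally show ?case .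
  qed
  have lim: "AE x in lborel. (\<lambda>n. s n x) \<longlonglongrightarrow> f x"
    using AEne
  proof eventually_elim
    case (elim x)
    have "x + 1 \<noteq> 0" using elim by (metis eq_neg_iff_add_eq_0)
    then have c: "cmod (x + 1) > 0" by simp
    have "(\<lambda>h. (t * L x) ^ h / fact h) sums exp (t * L x)"
      using exp_converges[of "t * L x"] by (simp add: divide_inverse mult.commute)
    then have "(\<lambda>n. \<Sum>h<n. (t * L x) ^ h / fact h) \<longlonglongrightarrow> cmod (x + 1) powr t"
      using c by (simp add: sums_def powr_def L_def)
    then show ?case unfolding s_def f_def by (intro tendsto_mult tendsto_const)
  qed
  have g_int: "integrable lborel (\<lambda>x. indicator D x * L x ^ h)" for h
  proof (rule Bochner_Integration.integrable_bound)
    show "integrable lborel (\<lambda>x. fact h * w x)" using wi by simp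
    show "(\<lambda>x. indicator D x * L x ^ h) \<in> borel_measurable lborel" by measurable
    show "AE x in lborel. norm (indicator D x * L x ^ h) \<le> norm (fact h * w x)"
      using AEne
    proof eventually_elim
      case (elim x)
      have "\<bar>L x\<bar> ^ h / fact h \<le> (\<Sum>k<Suc h. \<bar>L x\<bar> ^ k / fact k)"
        by (rule member_le_sum) auto
      also have "\<dots> \<le> exp \<bar>L x\<bar>" by (rule exp_partial_le) simp
      finally have "\<bar>L x\<bar> ^ h \<le> fact h * exp \<bar>L x\<bar>" by (simp add: field_simps)
      then have "indicator D x * \<bar>L x\<bar> ^ h \<le> fact h * (indicator D x * exp \<bar>L x\<bar>)"
        by (simp add: indicator_def)
      also have "\<dots> \<le> fact h * w x" using w_ge[OF elim] by simp
      finally have "indicator D x * \<bar>L x\<bar> ^ h \<le> fact h * w x" .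
      moreover have "w x \<ge> 0" by (simp add: w_def)
      ultimately show ?case by (simp add: abs_mult power_abs indicator_def)
    qed
  qed
  have conv: "(\<lambda>n. integral\<^sup>L lborel (s n)) \<longlonglongrightarrow> integral\<^sup>L lborel f"
    by (rule integral_dominated_convergence[OF _ _ wi lim bound]) measurable
  have sn: "integral\<^sup>L lborel (s n) = (\<Sum>h<n. t ^ h / fact h * integral\<^sup>L lborel (\<lambda>x. indicator D x * L x ^ h))" for n
  proof -
    have "s n = (\<lambda>x. \<Sum>h<n. t ^ h / fact h * (indicator D x * L x ^ h))"
      by (auto simp: s_def sum_distrib_left power_mult_distrib field_simps)
    then show ?thesis using g_int by simp
  qed
  have "integral\<^sup>L lborel f = Nval t" unfolding f_def D_def using t by (intro powr_int) auto
  with conv sn show ?thesis by (simp add: sums_def D_def L_def)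
qed

lemma dup_real:
  fixes x :: real assumes x: "x > 0"
  shows "Gamma x * Gamma (x + 1/2) = exp ((1 - 2 * x) * ln 2) * sqrt pi * Gamma (2 * x)"
proof -
  have n1: "complex_of_real x \<notin> \<int>\<^sub>\<le>\<^sub>0" using x by (auto simp: of_real_in_nonpos_Ints_iff elim!: nonpos_Ints_cases')
  have n2: "complex_of_real x + 1/2 \<notin> \<int>\<^sub>\<le>\<^sub>0"
  proof -
    have e: "complex_of_real x + 1/2 = complex_of_real (x + 1/2)" by simp
    have "complex_of_real (x + 1/2) \<notin> \<int>\<^sub>\<le>\<^sub>0"
      unfolding of_real_in_nonpos_Ints_iff using x by (auto elim!: nonpos_Ints_cases')
    then show ?thesis using e by metis
  qed
  have D: "Gamma (complex_of_real x) * Gamma (complex_of_real x + 1/2) =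
      exp ((1 - 2 * complex_of_real x) * of_real (ln 2)) * of_real (sqrt pi) * Gamma (2 * complex_of_real x)"
    by (rule Gamma_legendre_duplication[OF n1 n2])
  have e1: "complex_of_real x + 1/2 = complex_of_real (x + 1/2)" by simp
  have e2: "2 * complex_of_real x = complex_of_real (2 * x)" by simp
  have e3: "(1 - 2 * complex_of_real x) * of_real (ln 2) = complex_of_real ((1 - 2 * x) * ln 2)" by simp
  have "complex_of_real (Gamma x * Gamma (x + 1/2)) = complex_of_real (exp ((1 - 2 * x) * ln 2) * sqrt pi * Gamma (2 * x))"
  proof -
    have e4: "exp ((1 - 2 * complex_of_real x) * complex_of_real (ln 2)) = complex_of_real (exp ((1 - 2 * x) * ln 2))"
      by (simp flip: exp_of_real)
    show ?thesis using D unfolding e1 e2 Gamma_complex_of_real by (simp add: e4)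
  qed
  then show ?thesis by (simp only: of_real_eq_iff)
qed

lemma Nval_Gamma:
  fixes t :: real assumes t: "t > -2"
  shows "Nval t / pi = Gamma (t + 2) / (Gamma (t / 2 + 2))\<^sup>2"
proof -
  define x where "x = t / 2 + 1"
  have x: "x > 0" using t by (simp add: x_def)
  have Gx: "Gamma x > 0" using x by simp
  have G1: "Gamma (t / 2 + 2) = x * Gamma x"
  proof -
    have "Gamma (t / 2 + 2) = Gamma (x + 1)" by (rule arg_cong[where f=Gamma]) (simp add: x_def)
    moreover have "Gamma (x + 1) = x * Gamma x" using x by (intro Gamma_plus1) (auto elim!: nonpos_Ints_cases')
    ultimately show ?thesis by simp
  qed
  have G2: "Gamma ((t + 3) / 2) = exp ((1 - 2 * x) * ln 2) * sqrt pi * Gamma (t + 2) / Gamma x"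
  proof -
    have a: "(t + 3) / 2 = x + 1/2" and b: "t + 2 = 2 * x" by (simp_all add: x_def field_simps)
    show ?thesis unfolding a b using dup_real[OF x] Gx by (simp add: field_simps)
  qed
  have P: "2 powr (t + 2) * exp ((1 - 2 * x) * ln 2) = 2"
  proof -
    have "2 powr (t + 2) = exp ((t + 2) * ln 2)" by (simp add: powr_def)
    then have "2 powr (t + 2) * exp ((1 - 2 * x) * ln 2) = exp ((t + 2) * ln 2 + (1 - 2 * x) * ln 2)"
      by (simp add: exp_add)
    also have "(t + 2) * ln 2 + (1 - 2 * x) * ln 2 = ln 2" by (simp add: x_def algebra_simps)
    finally show ?thesis by simp
  qed
  have t2: "t + 2 = 2 * x" by (simp add: x_def)
  have "Nval t = 2 powr (t + 2) * exp ((1 - 2 * x) * ln 2) / (t + 2) * (sqrt pi * sqrt pi) * Gamma (t + 2) / (Gamma x * (x * Gamma x))"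
    unfolding Nval_def G1 G2 by (simp add: field_simps)
  also have "\<dots> = pi * Gamma (t + 2) / (x * Gamma x)\<^sup>2"
    unfolding P unfolding t2 using x Gx by (simp add: field_simps power2_eq_square)
  finally show ?thesis unfolding G1 by simp
qed

definition Hc :: "complex \<Rightarrow> complex" where
  "Hc z = Gamma (z + 2) / (Gamma (z / 2 + 2))\<^sup>2"

definition Fm :: "complex fps" where
  "Fm = Abs_fps (\<lambda>h. complex_of_real (mD h / fact h))"

lemma mD_sums:
  fixes t :: real assumes t: "\<bar>t\<bar> < 1"
  shows "(\<lambda>h. mD h / fact h * t ^ h) sums (Gamma (t + 2) / (Gamma (t / 2 + 2))\<^sup>2)"
proof -
  have t2: "t > -2" using t by simp
  have e: "mD h / fact h * t ^ h = t ^ h / fact h * integral\<^sup>L lborel (\<lambda>x. indicator (cball 0 1) x * ln (cmod (x + 1)) ^ h) / pi" for h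
    by (simp add: mD_def set_lebesgue_integral_def divide_inverse mult_ac)
  show ?thesis unfolding e Nval_Gamma[OF t2, symmetric]
    by (rule sums_divide[OF series_main[OF t]])
qed

lemma Re_pos_not_nonpos_Int: "Re w > 0 \<Longrightarrow> w \<notin> \<int>\<^sub>\<le>\<^sub>0"
  by (auto elim!: nonpos_Ints_cases)

lemma Hc_real:
  fixes t :: real assumes t: "t > -2"
  shows "Hc (complex_of_real t) = complex_of_real (Gamma (t + 2) / (Gamma (t / 2 + 2))\<^sup>2)"
proof -
  have "complex_of_real t + 2 = complex_of_real (t + 2)" "complex_of_real t / 2 + 2 = complex_of_real (t / 2 + 2)"
    by simp_all
  then show ?thesis unfolding Hc_def
    using Gamma_complex_of_real[of "t + 2"] Gamma_complex_of_real[of "t / 2 + 2"] by simp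
qed

lemma Fm_radius: "fps_conv_radius Fm \<ge> ereal (1/2)"
proof -
  have "(\<lambda>h. mD h / fact h * (1/2) ^ h) sums (Gamma (1/2 + 2) / (Gamma ((1/2) / 2 + 2))\<^sup>2)"
    by (rule mD_sums) simp
  then have "summable (\<lambda>h. mD h / fact h * (1/2) ^ h)" by (rule sums_summable)
  then have "summable (\<lambda>h. complex_of_real (mD h / fact h * (1/2) ^ h))"
    by (simp only: summable_complex_of_real)
  then have "summable (\<lambda>h. fps_nth Fm h * (1/2) ^ h)"
    by (simp add: Fm_def)
  then have "conv_radius (fps_nth Fm) \<ge> norm (1/2 :: complex)" by (rule conv_radius_geI)
  then show ?thesis by (simp add: fps_conv_radius_def)
qed

lemma Fm_eval_real:
  fixes t :: real assumes t: "\<bar>t\<bar> < 1"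
  shows "eval_fps Fm (complex_of_real t) = Hc (complex_of_real t)"
proof -
  have "(\<lambda>h. complex_of_real (mD h / fact h * t ^ h)) sums complex_of_real (Gamma (t + 2) / (Gamma (t / 2 + 2))\<^sup>2)"
    using mD_sums[OF t] by (simp only: sums_of_real_iff)
  then have "(\<lambda>h. fps_nth Fm h * complex_of_real t ^ h) sums Hc (complex_of_real t)"
    using t by (simp add: Fm_def Hc_real)
  then show ?thesis by (simp add: eval_fps_def sums_iff)
qed

lemma Hc_holo: "Hc holomorphic_on ball 0 1"
proof -
  have "Re (z + 2) > 0" "Re (z / 2 + 2) > 0" if "z \<in> ball 0 1" for z :: complex
  proof -
    have "\<bar>Re z\<bar> < 1" using that abs_Re_le_cmod[of z] by simp
    then show "Re (z + 2) > 0" "Re (z / 2 + 2) > 0" by auto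
  qed
  then have n1: "\<And>z::complex. z \<in> ball 0 1 \<Longrightarrow> z + 2 \<notin> \<int>\<^sub>\<le>\<^sub>0" and n2: "\<And>z::complex. z \<in> ball 0 1 \<Longrightarrow> z / 2 + 2 \<notin> \<int>\<^sub>\<le>\<^sub>0"
    using Re_pos_not_nonpos_Int by blast+
  show ?thesis unfolding Hc_def
    by (intro holomorphic_intros holomorphic_Gamma' n1 n2 power_not_zero Gamma_nonzero) auto
qed

lemma Fm_eq_Hc: "z \<in> ball 0 (1/2) \<Longrightarrow> eval_fps Fm z = Hc z"
proof -
  assume z: "z \<in> ball 0 (1/2)"
  define U where "U = complex_of_real ` {-1/4<..<1/4}"
  have sub: "ball (0::complex) (1/2) \<subseteq> eball 0 (fps_conv_radius Fm)"
  proof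
    fix w :: complex assume "w \<in> ball 0 (1/2)"
    then have "ereal (norm w) < ereal (1/2)" by simp
    also have "\<dots> \<le> fps_conv_radius Fm" by (rule Fm_radius)
    finally show "w \<in> eball 0 (fps_conv_radius Fm)" by simp
  qed
  have holo: "(\<lambda>z. eval_fps Fm z - Hc z) holomorphic_on ball 0 (1/2)"
    by (intro holomorphic_intros holomorphic_on_eval_fps[OF sub] holomorphic_on_subset[OF Hc_holo]) auto
  have U: "U \<subseteq> ball 0 (1/2)" by (auto simp: U_def)
  have lim: "0 islimpt U"
  proof (rule islimptI)
    fix T :: "complex set" assume T: "0 \<in> T" "open T"
    then obtain e where e: "e > 0" "ball 0 e \<subseteq> T" by (auto simp: open_contains_ball)
    define y where "y = min (e/2) (1/8)"
    have y: "y > 0" "y < e" "y < 1/4" using e by (auto simp: y_def)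
    have "complex_of_real y \<in> U" using y by (auto simp: U_def)
    moreover have "complex_of_real y \<in> T" using y e by (auto simp: dist_norm)
    moreover have "complex_of_real y \<noteq> 0" using y by simp
    ultimately show "\<exists>y\<in>U. y \<in> T \<and> y \<noteq> 0" by blast
  qed
  have zero: "eval_fps Fm w - Hc w = 0" if "w \<in> U" for w
    using that by (auto simp: U_def Fm_eval_real)
  have "eval_fps Fm z - Hc z = 0"
    by (rule analytic_continuation[OF holo _ _ U _ lim zero z]) auto
  then show ?thesis by simp
qed

lemma Hc_fps: "Hc has_fps_expansion Fm"
proof -
  have "(0::ereal) < ereal (1/2)" by (simp only: zero_ereal_def ereal_less) simp
  then have "fps_conv_radius Fm > 0" using Fm_radius by (rule less_le_trans)
  moreover have "eventually (\<lambda>z. eval_fps Fm z = Hc z) (nhds 0)"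
    using eventually_nhds_in_open[of "ball 0 (1/2)" 0] by (rule eventually_mono) (auto intro: Fm_eq_Hc)
  ultimately show ?thesis by (simp add: has_fps_expansion_def)
qed

lemma mD_deriv: "complex_of_real (mD n) = (deriv ^^ n) Hc 0"
proof -
  have "fps_nth Fm n = (deriv ^^ n) Hc 0 / fact n" by (rule fps_nth_fps_expansion[OF Hc_fps])
  then show ?thesis by (simp add: Fm_def field_simps)
qed

definition Pk :: "nat \<Rightarrow> complex \<Rightarrow> complex" where
  "Pk k z = Polygamma k (z + 2) - (1/2) ^ k * Polygamma k (z / 2 + 2)"

lemma nn12:
  assumes "z \<in> ball (0::complex) 1"
  shows "z + 2 \<notin> \<int>\<^sub>\<le>\<^sub>0" "z / 2 + 2 \<notin> \<int>\<^sub>\<le>\<^sub>0"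
proof -
  have "\<bar>Re z\<bar> < 1" using assms abs_Re_le_cmod[of z] by simp
  then have "Re (z + 2) > 0" "Re (z / 2 + 2) > 0" by auto
  then show "z + 2 \<notin> \<int>\<^sub>\<le>\<^sub>0" "z / 2 + 2 \<notin> \<int>\<^sub>\<le>\<^sub>0" using Re_pos_not_nonpos_Int by blast+
qed

lemma half_deriv: "((\<lambda>x::complex. x / 2 + 2) has_field_derivative 1/2) (at w)"
  by (rule derivative_eq_intros refl | simp)+

lemma plus_deriv: "((\<lambda>x::complex. x + 2) has_field_derivative 1) (at w)"
  by (rule derivative_eq_intros refl | simp)+

lemma Pk_deriv:
  assumes w: "w \<in> ball (0::complex) 1"
  shows "(Pk k has_field_derivative Pk (Suc k) w) (at w)"
proof -
  note n = nn12[OF w]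
  have "((\<lambda>w. Polygamma k (w + 2) - (1/2) ^ k * Polygamma k (w / 2 + 2)) has_field_derivative
      Polygamma (Suc k) (w + 2) * 1 - (1/2) ^ k * (Polygamma (Suc k) (w / 2 + 2) * (1/2))) (at w)"
    by (intro DERIV_diff DERIV_cmult DERIV_chain2[OF has_field_derivative_Polygamma] derivative_intros n half_deriv plus_deriv)
  then show ?thesis unfolding Pk_def by (simp add: field_simps)
qed

lemma Hc_deriv:
  assumes w: "w \<in> ball (0::complex) 1"
  shows "(Hc has_field_derivative Hc w * Pk 0 w) (at w)"
proof -
  note n = nn12[OF w]
  have B: "Gamma (w / 2 + 2) \<noteq> 0" using n(2) by (rule Gamma_nonzero)
  have A: "((\<lambda>w. Gamma (w + 2)) has_field_derivative Gamma (w + 2) * Digamma (w + 2)) (at w)"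
    using DERIV_chain2[OF _ plus_deriv, OF has_field_derivative_Gamma[OF n(1)]] by simp
  have C: "((\<lambda>w. Gamma (w / 2 + 2)) has_field_derivative Gamma (w / 2 + 2) * Digamma (w / 2 + 2) * (1/2)) (at w)"
    using DERIV_chain2[OF _ half_deriv, OF has_field_derivative_Gamma[OF n(2)]] by simp
  have B2: "(Gamma (w / 2 + 2))\<^sup>2 \<noteq> 0" using B by simp
  note X = DERIV_divide[OF A DERIV_power[OF C, of 2] B2]
  have Heq: "(\<lambda>w. Gamma (w + 2) / (Gamma (w / 2 + 2))\<^sup>2) = Hc" by (simp add: Hc_def[abs_def])
  from X[unfolded Heq] show ?thesis
    by (rule DERIV_cong) (use B in \<open>simp add: Hc_def Pk_def field_simps power2_eq_square\<close>)
qed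

lemma deriv_step:
  assumes U: "open U" "z \<in> U"
    and eq: "\<And>w. w \<in> U \<Longrightarrow> (deriv ^^ n) f w = g w"
    and d: "\<And>w. w \<in> U \<Longrightarrow> (g has_field_derivative g' w) (at w)"
  shows "(deriv ^^ Suc n) f z = g' z"
proof -
  have "((deriv ^^ n) f has_field_derivative g' z) (at z)"
    by (rule has_field_derivative_transform_within_open[OF d[OF U(2)] U]) (simp add: eq)
  then have "deriv ((deriv ^^ n) f) z = g' z" by (rule DERIV_imp_deriv)
  then show ?thesis by simp
qed

lemma prod_rule:
  assumes w: "w \<in> ball (0::complex) 1" and R: "(R has_field_derivative R' w) (at w)"
  shows "((\<lambda>w. Hc w * R w) has_field_derivative Hc w * (Pk 0 w * R w + R' w)) (at w)"
proof -
  show ?thesis using DERIV_mult[OF Hc_deriv[OF w] R] by (simp add: algebra_simps)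
qed

definition "R1 w = Pk 0 w"
definition "R2 w = Pk 1 w + Pk 0 w ^ 2"
definition "R3 w = Pk 2 w + 3 * Pk 0 w * Pk 1 w + Pk 0 w ^ 3"
definition "R4 w = Pk 3 w + 4 * Pk 0 w * Pk 2 w + 3 * Pk 1 w ^ 2 + 6 * Pk 0 w ^ 2 * Pk 1 w + Pk 0 w ^ 4"
definition "R5 w = Pk 4 w + 5 * Pk 0 w * Pk 3 w + 10 * Pk 1 w * Pk 2 w + 10 * Pk 0 w ^ 2 * Pk 2 w
   + 15 * Pk 0 w * Pk 1 w ^ 2 + 10 * Pk 0 w ^ 3 * Pk 1 w + Pk 0 w ^ 5"

lemma R_derivs:
  assumes w: "w \<in> ball (0::complex) 1"
  shows "(R1 has_field_derivative (R2 w - Pk 0 w * R1 w)) (at w)"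
    and "(R2 has_field_derivative (R3 w - Pk 0 w * R2 w)) (at w)"
    and "(R3 has_field_derivative (R4 w - Pk 0 w * R3 w)) (at w)"
    and "(R4 has_field_derivative (R5 w - Pk 0 w * R4 w)) (at w)"
proof -
  note D = Pk_deriv[OF w]
  show "(R1 has_field_derivative (R2 w - Pk 0 w * R1 w)) (at w)"
    unfolding R1_def[abs_def] R2_def by (rule derivative_eq_intros D refl | simp add: eval_nat_numeral algebra_simps power2_eq_square)+
  show "(R2 has_field_derivative (R3 w - Pk 0 w * R2 w)) (at w)"
    unfolding R2_def[abs_def] R3_def by (rule derivative_eq_intros D refl | simp add: eval_nat_numeral algebra_simps power2_eq_square power3_eq_cube)+
  show "(R3 has_field_derivative (R4 w - Pk 0 w * R3 w)) (at w)"
    unfolding R3_def[abs_def] R4_def by (rule derivative_eq_intros D refl | simp add: eval_nat_numeral algebra_simps power2_eq_square power3_eq_cube power4_eq_xxxx)+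
  show "(R4 has_field_derivative (R5 w - Pk 0 w * R4 w)) (at w)"
    unfolding R4_def[abs_def] R5_def by (rule derivative_eq_intros D refl | simp add: eval_nat_numeral algebra_simps power2_eq_square power3_eq_cube power4_eq_xxxx)+
qed

lemma eq_deriv:
  assumes "open S" "z \<in> S" "\<And>w. w \<in> S \<Longrightarrow> f w = g w"
    and "(f has_field_derivative f') (at z)" "(g has_field_derivative g') (at z)"
  shows "f' = g'"
proof -
  have "(g has_field_derivative f') (at z)"
    by (rule has_field_derivative_transform_within_open[OF assms(4,1,2)]) (use assms(3) in auto)
  then show ?thesis using assms(5) by (rule DERIV_unique)
qed

definition SS :: "complex set" where "SS = ball (1/2) (1/2)"

lemma SS_props:
  assumes "z \<in> SS"
  shows "z \<notin> \<int>\<^sub>\<le>\<^sub>0" "1 - z \<notin> \<int>\<^sub>\<le>\<^sub>0" "sin (of_real pi * z) \<noteq> 0"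
proof -
  have "\<bar>Re z - 1/2\<bar> < 1/2"
    using assms abs_Re_le_cmod[of "z - 1/2"] by (simp add: SS_def dist_norm norm_minus_commute)
  then have r: "0 < Re z" "Re z < 1" by arith+
  show "z \<notin> \<int>\<^sub>\<le>\<^sub>0" using r by (intro Re_pos_not_nonpos_Int) auto
  show "1 - z \<notin> \<int>\<^sub>\<le>\<^sub>0" using r by (intro Re_pos_not_nonpos_Int) auto
  show "sin (of_real pi * z) \<noteq> 0"
  proof
    assume "sin (of_real pi * z) = 0"
    then obtain n :: int where n: "of_real pi * z = of_real (n * pi)" by (auto simp: sin_eq_0)
    then have "z = of_int n" by (simp add: field_simps)
    then have "Re z = of_int n" by simp
    with r have "0 < (of_int n :: real)" "(of_int n :: real) < 1" by auto
    then show False by (simp only: of_int_0_less_iff of_int_less_1_iff)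
  qed
qed

lemma open_SS: "open SS" by (simp add: SS_def)

abbreviation "sn w \<equiv> sin (of_real pi * w :: complex)"
abbreviation "cs w \<equiv> cos (of_real pi * w :: complex)"

lemma lin_deriv: "((\<lambda>w::complex. of_real pi * w) has_field_derivative of_real pi) (at w)"
  by (rule derivative_eq_intros refl | simp)+
lemma minus_deriv: "((\<lambda>w::complex. 1 - w) has_field_derivative -1) (at w)"
  by (rule derivative_eq_intros refl | simp)+
lemma sn_deriv: "((\<lambda>w. sn w) has_field_derivative of_real pi * cs w) (at w)"
  using DERIV_chain2[OF DERIV_sin lin_deriv] by (simp add: mult.commute)
lemma cs_deriv: "((\<lambda>w. cs w) has_field_derivative - of_real pi * sn w) (at w)"
  using DERIV_chain2[OF DERIV_cos lin_deriv] by (simp add: mult.commute)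

lemma R1:
  assumes z: "z \<in> SS"
  shows "Digamma z - Digamma (1 - z) = - of_real pi * cs z / sn z"
proof -
  note p = SS_props[OF z]
  have fd: "((\<lambda>w. Gamma w * Gamma (1 - w)) has_field_derivative
      Gamma z * Digamma z * Gamma (1 - z) + Gamma z * (Gamma (1 - z) * Digamma (1 - z) * (-1))) (at z)"
    using DERIV_mult[OF has_field_derivative_Gamma[OF p(1)] DERIV_chain2[OF _ minus_deriv, OF has_field_derivative_Gamma[OF p(2)]]]
    by (rule DERIV_cong) (simp add: algebra_simps)
  have gd: "((\<lambda>w. of_real pi / sn w) has_field_derivative
      (0 * sn z - of_real pi * (of_real pi * cs z)) / (sn z * sn z)) (at z)"
    by (intro DERIV_divide sn_deriv p DERIV_const)
  have e1: "Gamma z * Digamma z * Gamma (1 - z) + Gamma z * (Gamma (1 - z) * Digamma (1 - z) * (-1))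
      = (0 * sn z - of_real pi * (of_real pi * cs z)) / (sn z * sn z)"
    by (rule eq_deriv[OF open_SS z _ fd gd]) (rule Gamma_reflection_complex)
  have e2: "Gamma z * Digamma z * Gamma (1 - z) + Gamma z * (Gamma (1 - z) * Digamma (1 - z) * (-1))
      = (Gamma z * Gamma (1 - z)) * (Digamma z - Digamma (1 - z))" by (simp add: algebra_simps)
  have "Gamma z * Gamma (1 - z) = of_real pi / sn z" by (rule Gamma_reflection_complex)
  with e1 e2 have h: "- (of_real pi * (of_real pi * cs z) / (sn z * sn z)) = of_real pi * (Digamma z - Digamma (1 - z)) / sn z"
    by simp
  have pi0: "(of_real pi :: complex) \<noteq> 0" by simp
  have "Digamma z - Digamma (1 - z) = (sn z / of_real pi) * (of_real pi * (Digamma z - Digamma (1 - z)) / sn z)"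
    using p(3) pi0 by (simp add: field_simps)
  also have "\<dots> = (sn z / of_real pi) * (- (of_real pi * (of_real pi * cs z) / (sn z * sn z)))" by (simp only: h)
  also have "\<dots> = - of_real pi * cs z / sn z" using p(3) pi0 by (simp add: field_simps)
  finally show ?thesis .
qed

lemma PG_deriv:
  assumes z: "z \<in> SS"
  shows "((\<lambda>w. Polygamma k w) has_field_derivative Polygamma (Suc k) z) (at z)"
    and "((\<lambda>w. Polygamma k (1 - w)) has_field_derivative Polygamma (Suc k) (1 - z) * (-1)) (at z)"
proof -
  note p = SS_props[OF z]
  show "((\<lambda>w. Polygamma k w) has_field_derivative Polygamma (Suc k) z) (at z)"
    by (rule has_field_derivative_Polygamma[OF p(1)])
  show "((\<lambda>w. Polygamma k (1 - w)) has_field_derivative Polygamma (Suc k) (1 - z) * (-1)) (at z)"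
    by (rule DERIV_chain2[OF _ minus_deriv, OF has_field_derivative_Polygamma[OF p(2)]])
qed

lemma R2:
  assumes z: "z \<in> SS"
  shows "Polygamma 1 z + Polygamma 1 (1 - z) = of_real pi ^ 2 / sn z ^ 2"
proof -
  note p = SS_props[OF z]
  have fd: "((\<lambda>w. Digamma w - Digamma (1 - w)) has_field_derivative Polygamma 1 z - Polygamma 1 (1 - z) * (-1)) (at z)"
    using DERIV_diff[OF PG_deriv(1)[OF z, of 0] PG_deriv(2)[OF z, of 0]] by simp
  have gd0: "((\<lambda>w. - of_real pi * cs w / sn w) has_field_derivative
      ((- of_real pi) * (- of_real pi * sn z) * sn z - (- of_real pi * cs z) * (of_real pi * cs z)) / (sn z * sn z)) (at z)"
    by (intro DERIV_divide DERIV_cmult cs_deriv sn_deriv p)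
  have gd: "((\<lambda>w. - of_real pi * cs w / sn w) has_field_derivative of_real pi ^ 2 / sn z ^ 2) (at z)"
  proof (rule DERIV_cong[OF gd0])
    have sc: "sn z ^ 2 + cs z ^ 2 = 1" by (rule sin_cos_squared_add)
    have alg: "\<And>P S C :: complex. (- P) * (- P * S) * S - (- P * C) * (P * C) = P ^ 2 * (S ^ 2 + C ^ 2)"
      by (simp add: algebra_simps power2_eq_square)
    have sq: "\<And>S :: complex. S * S = S ^ 2" by (simp add: power2_eq_square)
    show "((- of_real pi) * (- of_real pi * sn z) * sn z - (- of_real pi * cs z) * (of_real pi * cs z)) / (sn z * sn z)
        = of_real pi ^ 2 / sn z ^ 2"
      unfolding alg sc sq by simp
  qed
  have "Polygamma 1 z - Polygamma 1 (1 - z) * (-1) = of_real pi ^ 2 / sn z ^ 2"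
    by (rule eq_deriv[OF open_SS z _ fd gd]) (rule R1)
  then show ?thesis by simp
qed


lemma R3:
  assumes z: "z \<in> SS"
  shows "Polygamma 2 z - Polygamma 2 (1 - z) = - 2 * of_real pi ^ 3 * cs z / sn z ^ 3"
proof -
  note p = SS_props[OF z]
  have fd: "((\<lambda>w. Polygamma 1 w + Polygamma 1 (1 - w)) has_field_derivative Polygamma 2 z + Polygamma 2 (1 - z) * (-1)) (at z)"
    using DERIV_add[OF PG_deriv(1)[OF z, of 1] PG_deriv(2)[OF z, of 1]] by (simp add: numeral_2_eq_2)
  have gd0: "((\<lambda>w. of_real pi ^ 2 / sn w ^ 2) has_field_derivative
      (0 * sn z ^ 2 - of_real pi ^ 2 * (of_nat 2 * (of_real pi * cs z * sn z ^ (2 - Suc 0)))) / (sn z ^ 2 * sn z ^ 2)) (at z)"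
    by (intro DERIV_divide DERIV_const DERIV_power sn_deriv) (use p in simp)
  have gd: "((\<lambda>w. of_real pi ^ 2 / sn w ^ 2) has_field_derivative - 2 * of_real pi ^ 3 * cs z / sn z ^ 3) (at z)"
    by (rule DERIV_cong[OF gd0]) (use p(3) in \<open>simp add: field_simps power2_eq_square power3_eq_cube\<close>)
  have "Polygamma 2 z + Polygamma 2 (1 - z) * (-1) = - 2 * of_real pi ^ 3 * cs z / sn z ^ 3"
    by (rule eq_deriv[OF open_SS z _ fd gd]) (rule R2)
  then show ?thesis by simp
qed


lemma R4:
  assumes z: "z \<in> SS"
  shows "Polygamma 3 z + Polygamma 3 (1 - z) = 2 * of_real pi ^ 4 * (sn z ^ 2 + 3 * cs z ^ 2) / sn z ^ 4"
proof -
  note p = SS_props[OF z]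
  have fd: "((\<lambda>w. Polygamma 2 w - Polygamma 2 (1 - w)) has_field_derivative Polygamma 3 z - Polygamma 3 (1 - z) * (-1)) (at z)"
    using DERIV_diff[OF PG_deriv(1)[OF z, of 2] PG_deriv(2)[OF z, of 2]] by (simp add: numeral_3_eq_3 numeral_2_eq_2)
  have gd0: "((\<lambda>w. - 2 * of_real pi ^ 3 * cs w / sn w ^ 3) has_field_derivative
      ((- 2 * of_real pi ^ 3) * (- of_real pi * sn z) * sn z ^ 3 - (- 2 * of_real pi ^ 3 * cs z) * (of_nat 3 * (of_real pi * cs z * sn z ^ (3 - Suc 0)))) / (sn z ^ 3 * sn z ^ 3)) (at z)"
    by (intro DERIV_divide DERIV_cmult cs_deriv DERIV_power sn_deriv) (use p in simp)
  have gd: "((\<lambda>w. - 2 * of_real pi ^ 3 * cs w / sn w ^ 3) has_field_derivative 2 * of_real pi ^ 4 * (sn z ^ 2 + 3 * cs z ^ 2) / sn z ^ 4) (at z)"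
    by (rule DERIV_cong[OF gd0]) (use p(3) in \<open>simp add: field_simps eval_nat_numeral\<close>)
  have "Polygamma 3 z - Polygamma 3 (1 - z) * (-1) = 2 * of_real pi ^ 4 * (sn z ^ 2 + 3 * cs z ^ 2) / sn z ^ 4"
    by (rule eq_deriv[OF open_SS z _ fd gd]) (rule R3)
  then show ?thesis by simp
qed


lemma Polygamma3_half: "Polygamma 3 (1/2 :: complex) = of_real pi ^ 4"
proof -
  have h: "(1/2 :: complex) \<in> SS" by (simp add: SS_def)
  have s: "sn (1/2) = 1"
  proof -
    have "sn (1/2) = complex_of_real (sin (pi / 2))" by (simp flip: sin_of_real)
    then show ?thesis by simp
  qed
  have c: "cs (1/2) = 0"
  proof -
    have "cs (1/2) = complex_of_real (cos (pi / 2))" by (simp flip: cos_of_real)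
    then show ?thesis by simp
  qed
  have "Polygamma 3 (1/2) + Polygamma 3 (1 - 1/2) = 2 * of_real pi ^ 4 * (sn (1/2) ^ 2 + 3 * cs (1/2) ^ 2) / sn (1/2) ^ 4"
    by (rule R4[OF h])
  then have "2 * Polygamma 3 (1/2 :: complex) = 2 * of_real pi ^ 4" by (simp add: s c)
  then show ?thesis by simp
qed

lemma chain_step:
  assumes IH: "\<And>w. w \<in> ball 0 1 \<Longrightarrow> (deriv ^^ n) Hc w = Hc w * Ra w"
    and dR: "\<And>w. w \<in> ball 0 1 \<Longrightarrow> (Ra has_field_derivative (Rb w - Pk 0 w * Ra w)) (at w)"
    and z: "z \<in> ball 0 1"
  shows "(deriv ^^ Suc n) Hc z = Hc z * Rb z"
proof (rule deriv_step[where g="\<lambda>w. Hc w * Ra w" and g'="\<lambda>w. Hc w * Rb w"])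
  fix w :: complex assume w: "w \<in> ball 0 1"
  show "((\<lambda>w. Hc w * Ra w) has_field_derivative Hc w * Rb w) (at w)"
    using prod_rule[where R=Ra and R'="\<lambda>w. Rb w - Pk 0 w * Ra w", OF w dR[OF w]]
    by (rule DERIV_cong) (simp add: algebra_simps)
qed (use IH z in auto)

lemma D1: "w \<in> ball 0 1 \<Longrightarrow> (deriv ^^ 1) Hc w = Hc w * R1 w"
  using chain_step[of 0 "\<lambda>_. 1" R1] Hc_deriv by (simp add: R1_def)

lemma D2: "w \<in> ball 0 1 \<Longrightarrow> (deriv ^^ 2) Hc w = Hc w * R2 w"
  using chain_step[of 1 R1 R2, OF D1 R_derivs(1)] by (simp add: numeral_2_eq_2)

lemma D3: "w \<in> ball 0 1 \<Longrightarrow> (deriv ^^ 3) Hc w = Hc w * R3 w"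
  using chain_step[of 2 R2 R3, OF D2 R_derivs(2)] by (simp add: numeral_3_eq_3 numeral_2_eq_2)

lemma D4: "w \<in> ball 0 1 \<Longrightarrow> (deriv ^^ 4) Hc w = Hc w * R4 w"
proof -
  have "Suc 3 = 4" by simp
  then show "w \<in> ball 0 1 \<Longrightarrow> (deriv ^^ 4) Hc w = Hc w * R4 w"
    using chain_step[of 3 R3 R4, OF D3 R_derivs(3)] by metis
qed

lemma D5: "w \<in> ball 0 1 \<Longrightarrow> (deriv ^^ 5) Hc w = Hc w * R5 w"
proof -
  have "Suc 4 = 5" by simp
  then show "w \<in> ball 0 1 \<Longrightarrow> (deriv ^^ 5) Hc w = Hc w * R5 w"
    using chain_step[of 4 R4 R5, OF D4 R_derivs(4)] by metis
qed

lemma Hc0: "Hc 0 = 1"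
proof -
  have "Gamma (2::complex) = 1" using Gamma_numeral[of "num.Bit0 num.One"] by simp
  then show ?thesis by (simp add: Hc_def)
qed

lemma Pk0: "Pk k 0 = (1 - (1/2) ^ k) * Polygamma k 2"
  by (simp add: Pk_def algebra_simps)

lemma zeta_sums: "m \<ge> 2 \<Longrightarrow> (\<lambda>n. 1 / real (Suc n) ^ m) sums zeta m"
proof -
  assume m: "m \<ge> 2"
  have "summable (\<lambda>n. inverse (real n ^ m))" using inverse_power_summable[OF m] by simp
  then have "summable (\<lambda>n. inverse (real (Suc n) ^ m))" by (subst summable_Suc_iff)
  then have "summable (\<lambda>n. 1 / real (Suc n) ^ m)" by (simp add: divide_inverse)
  then show ?thesis unfolding zeta_def by (rule summable_sums)
qed

lemma zeta_shift:
  assumes m: "m \<ge> 2"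
  shows "(\<lambda>j. inverse ((2 + of_nat j :: complex) ^ m)) sums complex_of_real (zeta m - 1)"
proof -
  have "(\<lambda>n. 1 / real (Suc n) ^ m) sums (zeta m - 1 + 1 / real (Suc 0) ^ m)" using zeta_sums[OF m] by simp
  then have "(\<lambda>n. 1 / real (Suc (Suc n)) ^ m) sums (zeta m - 1)"
    by (subst sums_Suc_iff)
  then have "(\<lambda>n. complex_of_real (1 / real (Suc (Suc n)) ^ m)) sums complex_of_real (zeta m - 1)"
    by (simp only: sums_of_real_iff)
  moreover have "complex_of_real (1 / real (Suc (Suc n)) ^ m) = inverse ((2 + of_nat n :: complex) ^ m)" for n
    by (simp add: divide_inverse add.commute)
  ultimately show ?thesis by simp
qed

lemma Polygamma2:
  assumes k: "k \<ge> 1"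
  shows "Polygamma k (2::complex) = (-1) ^ Suc k * fact k * complex_of_real (zeta (Suc k) - 1)"
proof -
  have "(\<lambda>j. inverse ((2 + of_nat j :: complex) ^ Suc k)) sums ((-1) ^ Suc k * Polygamma k 2 / fact k)"
    using k by (intro Polygamma_LIMSEQ) auto
  moreover have "(\<lambda>j. inverse ((2 + of_nat j :: complex) ^ Suc k)) sums complex_of_real (zeta (Suc k) - 1)"
    using k by (intro zeta_shift) auto
  ultimately have e: "(-1) ^ Suc k * Polygamma k 2 / fact k = complex_of_real (zeta (Suc k) - 1)"
    by (rule sums_unique2)
  define S where "S = ((-1::complex) ^ Suc k)"
  have SS: "S * S = 1" unfolding S_def by (simp flip: power_add)
  have f: "(fact k :: complex) \<noteq> 0" by simp
  have "S * Polygamma k 2 = fact k * complex_of_real (zeta (Suc k) - 1)"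
    using e f unfolding S_def[symmetric] by (simp add: divide_eq_eq mult.commute)
  then have "S * (S * Polygamma k 2) = S * (fact k * complex_of_real (zeta (Suc k) - 1))" by simp
  then show ?thesis unfolding S_def[symmetric] by (simp add: mult.assoc[symmetric] SS)
qed

lemma odd4: "(\<lambda>n. 1 / real (2 * n + 1) ^ 4) sums (15 / 16 * zeta 4)"
proof -
  define f where "f = (\<lambda>n. 1 / real (Suc n) ^ 4)"
  have fz: "f sums zeta 4" unfolding f_def by (rule zeta_sums) simp
  have g: "(\<lambda>n. sum f {n * 2..<n * 2 + 2}) sums zeta 4" by (rule sums_group[OF fz]) simp
  have e: "sum f {n * 2..<n * 2 + 2} = 1 / real (2 * n + 1) ^ 4 + 1 / real (2 * n + 2) ^ 4" for n
  proof -
    have "{n * 2..<n * 2 + 2} = {2 * n, 2 * n + 1}" by auto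
    then show ?thesis by (simp add: f_def algebra_simps)
  qed
  have ev: "(\<lambda>n. 1 / real (2 * n + 2) ^ 4) sums (zeta 4 / 16)"
  proof -
    have "(\<lambda>n. f n / 16) sums (zeta 4 / 16)" by (rule sums_divide[OF fz])
    moreover have "f n / 16 = 1 / real (2 * n + 2) ^ 4" for n
    proof -
      have "real (2 * n + 2) ^ 4 = (2 * real (Suc n)) ^ 4" by simp
      also have "\<dots> = 16 * real (Suc n) ^ 4" by (simp only: power_mult_distrib) simp
      finally show ?thesis by (simp add: f_def)
    qed
    ultimately show ?thesis by simp
  qed
  have "(\<lambda>n. (1 / real (2 * n + 1) ^ 4 + 1 / real (2 * n + 2) ^ 4) - 1 / real (2 * n + 2) ^ 4) sums (zeta 4 - zeta 4 / 16)"
    by (rule sums_diff[OF g[unfolded e] ev])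
  then show ?thesis by simp
qed

lemma A4: "(\<lambda>k. inverse ((1/2 + of_nat k :: complex) ^ 4)) sums complex_of_real (pi ^ 4 / 6)"
proof -
  have L: "(\<lambda>k. inverse ((1/2 + of_nat k :: complex) ^ Suc 3)) sums ((-1) ^ Suc 3 * Polygamma 3 (1/2) / fact 3)"
    by (intro Polygamma_LIMSEQ) auto
  have s3: "Suc 3 = 4" by simp
  have m1: "(-1::complex) ^ 4 = 1" by simp
  have f6: "(fact 3 :: complex) = 6" by (simp add: fact_numeral)
  have "(\<lambda>k. inverse ((1/2 + of_nat k :: complex) ^ 4)) sums (1 * of_real pi ^ 4 / 6)"
    using L unfolding s3 m1 f6 Polygamma3_half .
  then show ?thesis by simp
qed

lemma term4: "complex_of_real (16 * (1 / real (2 * n + 1) ^ 4)) = inverse ((1/2 + of_nat n :: complex) ^ 4)"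
proof -
  have e: "(1/2 + of_nat n :: complex) = complex_of_real (real (2 * n + 1) / 2)" by simp
  have "inverse ((1/2 + of_nat n :: complex) ^ 4) = complex_of_real (inverse ((real (2 * n + 1) / 2) ^ 4))"
    unfolding e by (simp only: of_real_inverse of_real_power)
  also have "inverse ((real (2 * n + 1) / 2) ^ 4) = 16 * (1 / real (2 * n + 1) ^ 4)"
    by (simp add: power_divide)
  finally show ?thesis by simp
qed

lemma zeta4: "zeta 4 = pi ^ 4 / 90"
proof -
  have "(\<lambda>n. 16 * (1 / real (2 * n + 1) ^ 4)) sums (16 * (15 / 16 * zeta 4))" by (rule sums_mult[OF odd4])
  then have "(\<lambda>n. complex_of_real (16 * (1 / real (2 * n + 1) ^ 4))) sums complex_of_real (16 * (15 / 16 * zeta 4))"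
    by (simp only: sums_of_real_iff)
  then have B: "(\<lambda>n. inverse ((1/2 + of_nat n :: complex) ^ 4)) sums complex_of_real (16 * (15 / 16 * zeta 4))"
    by (simp only: term4)
  have "complex_of_real (16 * (15 / 16 * zeta 4)) = complex_of_real (pi ^ 4 / 6)" by (rule sums_unique2[OF B A4])
  then have "16 * (15 / 16 * zeta 4) = pi ^ 4 / 6" by (simp only: of_real_eq_iff)
  then show ?thesis by simp
qed

lemma zeta2: "zeta 2 = pi ^ 2 / 6"
proof -
  have "(\<lambda>n. 1 / real (Suc n) ^ 2) sums zeta 2" by (rule zeta_sums) simp
  moreover have "(\<lambda>n. 1 / real (Suc n) ^ 2) sums (pi ^ 2 / 6)" using inverse_squares_sums by simp
  ultimately show ?thesis by (rule sums_unique2)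
qed

lemma Pk_00: "Pk 0 0 = 0" by (simp add: Pk0)

lemma Pk_val:
  "Pk 1 0 = complex_of_real ((zeta 2 - 1) / 2)"
  "Pk 2 0 = complex_of_real (- (3 / 2) * (zeta 3 - 1))"
  "Pk 3 0 = complex_of_real (21 / 4 * (zeta 4 - 1))"
  "Pk 4 0 = complex_of_real (- (45 / 2) * (zeta 5 - 1))"
proof -
  have a: "Polygamma 1 (2::complex) = complex_of_real (zeta 2 - 1)"
    using Polygamma2[of 1, unfolded Suc_1] by simp
  have b: "Polygamma 2 (2::complex) = - 2 * complex_of_real (zeta 3 - 1)"
    using Polygamma2[of 2] by (simp add: numeral_3_eq_3 numeral_2_eq_2)
  have c: "Polygamma 3 (2::complex) = 6 * complex_of_real (zeta 4 - 1)"
  proof -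
    have "Suc 3 = 4" by simp
    then show ?thesis using Polygamma2[of 3] by (simp add: fact_numeral)
  qed
  have d: "Polygamma 4 (2::complex) = - 24 * complex_of_real (zeta 5 - 1)"
  proof -
    have "Suc 4 = 5" by simp
    then show ?thesis using Polygamma2[of 4] by (simp add: fact_numeral)
  qed
  show "Pk 1 0 = complex_of_real ((zeta 2 - 1) / 2)" using a by (simp add: Pk0)
  show "Pk 2 0 = complex_of_real (- (3 / 2) * (zeta 3 - 1))" unfolding Pk0 b by (simp add: field_simps power2_eq_square)
  show "Pk 3 0 = complex_of_real (21 / 4 * (zeta 4 - 1))" unfolding Pk0 c by (simp add: field_simps eval_nat_numeral)
  show "Pk 4 0 = complex_of_real (- (45 / 2) * (zeta 5 - 1))" unfolding Pk0 d by (simp add: field_simps eval_nat_numeral)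
qed

lemma mD_vals:
  "complex_of_real (mD 1) = 0"
  "complex_of_real (mD 2) = Pk 1 0"
  "complex_of_real (mD 3) = Pk 2 0"
  "complex_of_real (mD 4) = Pk 3 0 + 3 * Pk 1 0 ^ 2"
  "complex_of_real (mD 5) = Pk 4 0 + 10 * Pk 1 0 * Pk 2 0"
proof -
  have z: "(0::complex) \<in> ball 0 1" by simp
  show "complex_of_real (mD 1) = 0" using D1[OF z] by (simp add: mD_deriv Hc0 R1_def Pk_00)
  show "complex_of_real (mD 2) = Pk 1 0" using D2[OF z] by (simp add: mD_deriv Hc0 R2_def Pk_00)
  show "complex_of_real (mD 3) = Pk 2 0" using D3[OF z] by (simp add: mD_deriv Hc0 R3_def Pk_00)
  show "complex_of_real (mD 4) = Pk 3 0 + 3 * Pk 1 0 ^ 2" using D4[OF z] by (simp add: mD_deriv Hc0 R4_def Pk_00)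
  show "complex_of_real (mD 5) = Pk 4 0 + 10 * Pk 1 0 * Pk 2 0" using D5[OF z] by (simp add: mD_deriv Hc0 R5_def Pk_00)
qed

theorem mainTheorem11:
  shows "mD 1 = 0 \<and>
         mD 2 = (zeta 2 - 1) / 2 \<and>
         mD 3 = - (3 * (zeta 3 - 1) / 2) \<and>
         mD 4 = 3 * (19 * zeta 4 - 4 * zeta 2 - 12) / 8 \<and>
         mD 5 = - (15 * (3 * zeta 5 + zeta 3 * zeta 2 - zeta 3 - zeta 2 - 2) / 2)"
proof (intro conjI)
  show "mD 1 = 0" using mD_vals(1) by simp
  show "mD 2 = (zeta 2 - 1) / 2" using mD_vals(2) unfolding Pk_val by (simp only: of_real_eq_iff)
  show "mD 3 = - (3 * (zeta 3 - 1) / 2)"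
  proof -
    have "mD 3 = - (3 / 2) * (zeta 3 - 1)" using mD_vals(3) unfolding Pk_val by (simp only: of_real_eq_iff)
    then show ?thesis by simp
  qed
  show "mD 4 = 3 * (19 * zeta 4 - 4 * zeta 2 - 12) / 8"
  proof -
    have "complex_of_real (mD 4) = complex_of_real (21 / 4 * (zeta 4 - 1) + 3 * ((zeta 2 - 1) / 2) ^ 2)"
      using mD_vals(4) unfolding Pk_val by simp
    then have "mD 4 = 21 / 4 * (zeta 4 - 1) + 3 * ((zeta 2 - 1) / 2) ^ 2" by (simp only: of_real_eq_iff)
    also have "\<dots> = 3 * (19 * zeta 4 - 4 * zeta 2 - 12) / 8"
      unfolding zeta4 zeta2 by (simp add: field_simps power2_eq_square eval_nat_numeral)
    finally show ?thesis .
  qed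
  show "mD 5 = - (15 * (3 * zeta 5 + zeta 3 * zeta 2 - zeta 3 - zeta 2 - 2) / 2)"
  proof -
    have "complex_of_real (mD 5) = complex_of_real (- (45 / 2) * (zeta 5 - 1) + 10 * ((zeta 2 - 1) / 2) * (- (3 / 2) * (zeta 3 - 1)))"
      using mD_vals(5) unfolding Pk_val by simp
    then have h: "mD 5 = - (45 / 2) * (zeta 5 - 1) + 10 * ((zeta 2 - 1) / 2) * (- (3 / 2) * (zeta 3 - 1))" by (simp only: of_real_eq_iff)
    show ?thesis unfolding h by (simp add: field_simps)
  qed
qed

end
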